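(* Assume Assumption (S). Let $U$ be a sufficiently smooth solution of $U_t+\beta U_x=0$ on $\Omega$ with periodic boundary conditions, $U^n=U(\cdot,n\tau)$, and define reference functions $U^{n,0}=U^n$, $U^{n,\ell+1}=\sum_{0\le\kappa\le\ell}(c_{\ell\kappa}U^{n,\kappa}-\tau d_{\ell\kappa}\beta U^{n,\kappa}_x)$ for $\ell=0,\dots,s-2$, and $U^{n,s}=U^{n+1}$. Define $\rho^{n,\ell+1}=0$ for $\ell<s-1$ and $\rho^{n,s}=\frac1\tau\big(U^{n+1}-\sum_{0\le\kappa\le s-1}(c_{s-1,\kappa}U^{n,\kappa}-\tau d_{s-1,\kappa}\beta U^{n,\kappa}_x)\big)$. Then for all $\omega\in\mathbb V^k$ and $\ell=0,\dots,s-1$, $$(U^{n,\ell+1},M^*\omega)=\sum_{0\le\kappa\le\ell}\big(c_{\ell\kappa}(U^{n,\kappa},M^*\omega)+\tau d_{\ell\kappa}\mathcal H^*(U^{n,\kappa},\omega)\big)+\tau(\rho^{n,\ell+1},M^*\omega).$$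
   Context: Let $\Omega=[a,b]$ be partitioned into finitely many cells $I_i=[x_{i-\frac12},x_{i+\frac12}]$ with sizes $h_i$; indices periodic. $(\cdot,\cdot)$: $L^2(\Omega)$ inner product; $(\cdot,\cdot)_{I_i}$: $L^2(I_i)$ inner product. $\mathbb V^k=\{v\in L^2(\Omega): v|_{I_i}\in\mathbb P^k(I_i)\ \forall i\}$. Each $I_i$ has subdivision points $x_{i-\frac12}=x_{i,0}<x_{i,1}<\dots<x_{i,k}<x_{i,k+1}=x_{i+\frac12}$, control volumes $I_{i,j}=[x_{i,j},x_{i,j+1}]$; $\mathbb V^{k,*}$ = functions constant on each $I_{i,j}$. Quadrature on $I_i$: $Q_i^k(v)=\sum_{j=0}^{k+1}A_{i,j}v(x_{i,j})$ (applied to restrictions to $I_i$, endpoint values from inside), error $R_i^k(v)=\int_{I_i}v\,dx-Q_i^k(v)$, exact on $\mathbb P^{k-1}(I_i)$. $M^*:\mathbb V^k\to\mathbb V^{k,*}$: for $v=\omega|_{I_i}$, $(M^*\omega)|_{I_{i,0}}=v(x_{i-\frac12})+A_{i,0}v'(x_{i-\frac12})$, $(M^*\omega)|_{I_{i,j}}-(M^*\omega)|_{I_{i,j-1}}=A_{i,j}v'(x_{i,j})$, $j=1,\dots,k$. $L_{i,\ell}$: shifted Legendre polynomial of degree $\ell$ on $I_i$, $L_{i,\ell}(x_{i+\frac12})=1$, $(L_{i,\ell},L_{i,m})_{I_i}=\delta_{\ell m}h_i/(2\ell+1)$. Assumption (S): $k\ge1$ and for every $i$, $R_i^k$ vanishes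 on $\mathbb P^{2k-1}(I_i)$ and $\frac{h_i}{2k-1}-Q_i^k(L_{i,k+1}L_{i,k-1})>0$. Jumps $[\![v]\!]_{i+\frac12}=v(x_{i+\frac12}^+)-v(x_{i+\frac12}^-)$. For $\omega\in\mathbb V^k$ and $v$ piecewise smooth (in particular continuous $v$): $\mathcal H^*(v,\omega)=\beta\big(\sum_iQ_i^k(v\omega_x)+\sum_iv(x_{i+\frac12}^-)[\![\omega]\!]_{i+\frac12}-\sum_iA_{i,0}\omega_x(x_{i-\frac12}^+)[\![v]\!]_{i-\frac12}\big)$, $\beta>0$ constant. $c_{\ell\kappa},d_{\ell\kappa}$ ($0\le\kappa\le\ell\le s-1$, $\sum_\kappa c_{\ell\kappa}=1$) are explicit $s$-stage Runge–Kutta coefficients, $\tau>0$ the time step. *)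

theory Defs
  imports "HOL-Analysis.Analysis" "HOL-Computational_Algebra.Polynomial"
begin

text \<open>Mesh: N cells I_i = [xb i, xb (Suc i)], i < N, periodic indices (mod N).
  Subdivision points xs i j, j = 0..k+1, with xs i 0 = xb i and xs i (k+1) = xb (Suc i).  A function in V^k is given by its N cell polynomials
  omega i (degree at most k); restriction to I_i is poly (omega i).\<close>

definition cellsize :: "(nat \<Rightarrow> real) \<Rightarrow> nat \<Rightarrow> real" where
  "cellsize xb i = xb (Suc i) - xb i"

definition quadQ :: "nat \<Rightarrow> (nat \<Rightarrow> nat \<Rightarrow> real) \<Rightarrow> (nat \<Rightarrow> nat \<Rightarrow> real) \<Rightarrow> nat \<Rightarrow> (real \<Rightarrow> real) \<Rightarrow> real" where
  "quadQ k xs A i f = (\<Sum>j\<le>Suc k. A i j * f (xs i j))"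

definition shiftedLegendre :: "(nat \<Rightarrow> real) \<Rightarrow> nat \<Rightarrow> nat \<Rightarrow> real \<Rightarrow> real" where
  "shiftedLegendre xb i l x =
     (\<Sum>m\<le>l. real (l choose m) * real ((l + m) choose m) * ((x - xb (Suc i)) / cellsize xb i) ^ m)"

definition assumptionS :: "nat \<Rightarrow> nat \<Rightarrow> (nat \<Rightarrow> real) \<Rightarrow> (nat \<Rightarrow> nat \<Rightarrow> real) \<Rightarrow> (nat \<Rightarrow> nat \<Rightarrow> real) \<Rightarrow> bool" where
  "assumptionS N k xb xs A \<longleftrightarrow> k \<ge> 1 \<and>
     (\<forall>i<N. (\<forall>p :: real poly. degree p \<le> 2*k - 1 \<longrightarrow>
                integral {xb i..xb (Suc i)} (poly p) = quadQ k xs A i (poly p))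
          \<and> cellsize xb i / (2 * real k - 1)
              - quadQ k xs A i (\<lambda>x. shiftedLegendre xb i (k+1) x * shiftedLegendre xb i (k-1) x) > 0)"

text \<open>M^* omega, a piecewise constant function: value on I_{i,j}.\<close>
fun Mstar :: "(nat \<Rightarrow> real) \<Rightarrow> (nat \<Rightarrow> nat \<Rightarrow> real) \<Rightarrow> (nat \<Rightarrow> nat \<Rightarrow> real) \<Rightarrow> (nat \<Rightarrow> real poly) \<Rightarrow> nat \<Rightarrow> nat \<Rightarrow> real" where
  "Mstar xb xs A \<omega> i 0 = poly (\<omega> i) (xb i) + A i 0 * poly (pderiv (\<omega> i)) (xb i)"
| "Mstar xb xs A \<omega> i (Suc j) = Mstar xb xs A \<omega> i j + A i (Suc j) * poly (pderiv (\<omega> i)) (xs i (Suc j))"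

text \<open>L^2(Omega) inner product (v, w) of a function v with a piecewise constant
  function w in V^{k,*} given by its values w i j on I_{i,j}.\<close>
definition ipStar :: "nat \<Rightarrow> nat \<Rightarrow> (nat \<Rightarrow> nat \<Rightarrow> real) \<Rightarrow> (real \<Rightarrow> real) \<Rightarrow> (nat \<Rightarrow> nat \<Rightarrow> real) \<Rightarrow> real" where
  "ipStar N k xs v w = (\<Sum>i<N. \<Sum>j\<le>k. integral {xs i j..xs i (Suc j)} (\<lambda>x. v x * w i j))"

text \<open>The bilinear form H^*(v, omega) for continuous v (one-sided traces of v equal v);
  the cell to the left of x_{i-1/2} is (i + N - 1) mod N, to the right of x_{i+1/2} is Suc i mod N.\<close>
definition Hstar :: "real \<Rightarrow> nat \<Rightarrow> nat \<Rightarrow> (nat \<Rightarrow> real) \<Rightarrow> (nat \<Rightarrow> nat \<Rightarrow> real) \<Rightarrow> (nat \<Rightarrow> nat \<Rightarrow> real)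
     \<Rightarrow> (real \<Rightarrow> real) \<Rightarrow> (nat \<Rightarrow> real poly) \<Rightarrow> real" where
  "Hstar \<beta> N k xb xs A v \<omega> = \<beta> *
     ((\<Sum>i<N. quadQ k xs A i (\<lambda>x. v x * poly (pderiv (\<omega> i)) x))
      + (\<Sum>i<N. v (xb (Suc i)) *
            (poly (\<omega> (Suc i mod N)) (xb (Suc i mod N)) - poly (\<omega> i) (xb (Suc i))))
      - (\<Sum>i<N. A i 0 * poly (pderiv (\<omega> i)) (xb i) *
            (v (xb i) - v (xb (Suc ((i + N - 1) mod N))))))"

fun Uref :: "(nat \<Rightarrow> nat \<Rightarrow> real) \<Rightarrow> (nat \<Rightarrow> nat \<Rightarrow> real) \<Rightarrow> real \<Rightarrow> real \<Rightarrow> nat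
     \<Rightarrow> (real \<Rightarrow> real \<Rightarrow> real) \<Rightarrow> nat \<Rightarrow> nat \<Rightarrow> real \<Rightarrow> real" where
  "Uref c d \<beta> \<tau> s U n 0 = (\<lambda>x. U x (real n * \<tau>))"
| "Uref c d \<beta> \<tau> s U n (Suc l) =
     (if Suc l = s then (\<lambda>x. U x (real (Suc n) * \<tau>))
      else (\<lambda>x. \<Sum>\<kappa>\<le>l. c l \<kappa> * Uref c d \<beta> \<tau> s U n \<kappa> x
                        - \<tau> * d l \<kappa> * \<beta> * deriv (Uref c d \<beta> \<tau> s U n \<kappa>) x))"

fun rho :: "(nat \<Rightarrow> nat \<Rightarrow> real) \<Rightarrow> (nat \<Rightarrow> nat \<Rightarrow> real) \<Rightarrow> real \<Rightarrow> real \<Rightarrow> nat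
     \<Rightarrow> (real \<Rightarrow> real \<Rightarrow> real) \<Rightarrow> nat \<Rightarrow> nat \<Rightarrow> real \<Rightarrow> real" where
  "rho c d \<beta> \<tau> s U n 0 = (\<lambda>x. 0)"
| "rho c d \<beta> \<tau> s U n (Suc l) =
     (if Suc l = s then
        (\<lambda>x. (1 / \<tau>) * (U x (real (Suc n) * \<tau>)
              - (\<Sum>\<kappa>\<le>l. c l \<kappa> * Uref c d \<beta> \<tau> s U n \<kappa> x
                        - \<tau> * d l \<kappa> * \<beta> * deriv (Uref c d \<beta> \<tau> s U n \<kappa>) x)))
      else (\<lambda>x. 0))"

end

theory Submission
  imports Defs
begin

definition smoothf :: "(real \<Rightarrow> real) \<Rightarrow> bool" where
  "smoothf f \<longleftrightarrow> (\<forall>m x. (deriv ^^ m) f differentiable (at x))"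

lemma smoothf_diff: "smoothf f \<Longrightarrow> f differentiable (at x)"
  unfolding smoothf_def by (metis funpow_0)

lemma smoothf_fdiff: "smoothf f \<Longrightarrow> f field_differentiable (at x)"
  using smoothf_diff[of f x] DERIV_deriv_iff_real_differentiable field_differentiable_def by blast

lemma smoothf_deriv: "smoothf f \<Longrightarrow> smoothf (deriv f)"
  unfolding smoothf_def by (metis comp_apply funpow_Suc_right)

lemma deriv_pow_add:
  "smoothf f \<Longrightarrow> smoothf g \<Longrightarrow> (deriv ^^ m) (\<lambda>x. f x + g x) = (\<lambda>x. (deriv ^^ m) f x + (deriv ^^ m) g x)"
proof (induction m arbitrary: f g)
  case 0 then show ?case by simp
next
  case (Suc m)
  have "deriv (\<lambda>x. f x + g x) = (\<lambda>x. deriv f x + deriv g x)"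
    using Suc.prems by (intro ext deriv_add) (auto intro: smoothf_fdiff)
  then have "(deriv ^^ Suc m) (\<lambda>x. f x + g x) = (deriv ^^ m) (\<lambda>x. deriv f x + deriv g x)"
    by (simp only: funpow_Suc_right comp_apply)
  also have "\<dots> = (\<lambda>x. (deriv ^^ m) (deriv f) x + (deriv ^^ m) (deriv g) x)"
    using Suc.IH[of "deriv f" "deriv g"] Suc.prems by (simp add: smoothf_deriv)
  finally show ?case by (simp only: funpow_Suc_right comp_apply)
qed

lemma smoothf_add: "smoothf f \<Longrightarrow> smoothf g \<Longrightarrow> smoothf (\<lambda>x. f x + g x)"
proof -
  assume a: "smoothf f" "smoothf g"
  show ?thesis unfolding smoothf_def deriv_pow_add[OF a]
    using a unfolding smoothf_def by (auto intro: differentiable_add)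
qed

lemma deriv_pow_cmult:
  "smoothf f \<Longrightarrow> (deriv ^^ m) (\<lambda>x. a * f x) = (\<lambda>x. a * (deriv ^^ m) f x)"
proof (induction m arbitrary: f)
  case 0 then show ?case by simp
next
  case (Suc m)
  have "deriv (\<lambda>x. a * f x) = (\<lambda>x. a * deriv f x)"
    using Suc.prems by (intro ext deriv_cmult) (auto intro: smoothf_fdiff)
  then have "(deriv ^^ Suc m) (\<lambda>x. a * f x) = (deriv ^^ m) (\<lambda>x. a * deriv f x)"
    by (simp only: funpow_Suc_right comp_apply)
  also have "\<dots> = (\<lambda>x. a * (deriv ^^ m) (deriv f) x)"
    using Suc.IH[of "deriv f"] Suc.prems by (simp add: smoothf_deriv)
  finally show ?case by (simp only: funpow_Suc_right comp_apply)
qed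

lemma smoothf_cmult: "smoothf f \<Longrightarrow> smoothf (\<lambda>x. a * f x)"
  unfolding smoothf_def
  by (simp add: deriv_pow_cmult smoothf_def) 

lemma smoothf_minus: "smoothf f \<Longrightarrow> smoothf g \<Longrightarrow> smoothf (\<lambda>x. f x - g x)"
  using smoothf_add[of f "\<lambda>x. (-1) * g x"] smoothf_cmult[of g "-1"] by simp

lemma smoothf_sum: "(\<And>j. j \<le> (l::nat) \<Longrightarrow> smoothf (f j)) \<Longrightarrow> smoothf (\<lambda>x. \<Sum>j\<le>l. f j x)"
proof (induction l)
  case 0 then show ?case by simp
next
  case (Suc l)
  then show ?case by (simp add: smoothf_add)
qed

definition perf :: "real \<Rightarrow> (real \<Rightarrow> real) \<Rightarrow> bool" where
  "perf p f \<longleftrightarrow> (\<forall>x. f (x + p) = f x)"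

lemma perf_deriv: assumes "smoothf f" "perf p f" shows "perf p (deriv f)"
  unfolding perf_def
proof
  fix x
  have e: "(\<lambda>y. f (y + p)) = f" using assms(2) unfolding perf_def by auto
  have "(f has_field_derivative deriv f (x + p)) (at (x + p))"
    using smoothf_diff[OF assms(1)] by (simp add: DERIV_deriv_iff_real_differentiable)
  then have "((\<lambda>y. f (y + p)) has_field_derivative deriv f (x + p)) (at x)"
    by (simp add: DERIV_shift)
  then have "(f has_field_derivative deriv f (x + p)) (at x)" using e by simp
  then show "deriv f (x + p) = deriv f x" by (simp add: DERIV_imp_deriv)
qed

lemma sbp:
  fixes M V D :: "nat \<Rightarrow> real"
  assumes "\<And>j. M (Suc j) = M j + D (Suc j)"
  shows "(\<Sum>j\<le>k. M j * (V (Suc j) - V j)) = M k * V (Suc k) - M 0 * V 0 - (\<Sum>j\<in>{1..k}. D j * V j)"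
proof (induction k)
  case 0 then show ?case by (simp add: algebra_simps)
next
  case (Suc k)
  then show ?case using assms[of k] by (simp add: algebra_simps)
qed

lemma sbp2:
  fixes M D :: "nat \<Rightarrow> real"
  assumes "\<And>j. M (Suc j) = M j + D (Suc j)"
  shows "M k = M 0 + (\<Sum>j\<in>{1..k}. D j)"
  by (induction k) (auto simp: assms)

lemma int_deriv:
  fixes f :: "real \<Rightarrow> real"
  assumes "a \<le> b" "\<And>x. f differentiable (at x)"
  shows "integral {a..b} (deriv f) = f b - f a"
proof -
  have "\<And>x. (f has_vector_derivative deriv f x) (at x within {a..b})"
    using assms(2) by (metis DERIV_deriv_iff_real_differentiable has_field_derivative_at_within
        has_real_derivative_iff_has_vector_derivative)
  from fundamental_theorem_of_calculus[OF assms(1) this] show ?thesis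
    by (rule integral_unique)
qed

lemma sum_split_ends: "(\<Sum>j\<le>Suc k. g j) = g 0 + (\<Sum>j\<in>{1..k}. g j) + (g (Suc k) :: real)"
proof -
  have "(\<Sum>j\<le>k. g j) = g 0 + (\<Sum>j\<in>{1..k}. g j)"
    by (simp add: atMost_atLeast0 sum.atLeast_Suc_atMost)
  then show ?thesis by simp
qed

lemma cell:
  fixes v :: "real \<Rightarrow> real"
  assumes sub0: "xs i 0 = xb i" and subend: "xs i (Suc k) = xb (Suc i)"
    and mono: "\<And>j. j \<le> k \<Longrightarrow> xs i j < xs i (Suc j)"
    and mono2: "xb i \<le> xb (Suc i)"
    and vd: "\<And>x. v differentiable (at x)"
    and ex: "integral {xb i..xb (Suc i)} (poly (pderiv (\<omega> i))) = quadQ k xs A i (poly (pderiv (\<omega> i)))"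
  shows "(\<Sum>j\<le>k. integral {xs i j..xs i (Suc j)} (\<lambda>x. deriv v x * Mstar xb xs A \<omega> i j))
     = poly (\<omega> i) (xb (Suc i)) * v (xb (Suc i)) - poly (\<omega> i) (xb i) * v (xb i)
       - quadQ k xs A i (\<lambda>x. v x * poly (pderiv (\<omega> i)) x)"
proof -
  define M where "M = Mstar xb xs A \<omega> i"
  define V where "V = (\<lambda>j. v (xs i j))"
  define D where "D = (\<lambda>j. A i j * poly (pderiv (\<omega> i)) (xs i j))"
  have MS: "\<And>j. M (Suc j) = M j + D (Suc j)" by (simp add: M_def D_def)
  have M0: "M 0 = poly (\<omega> i) (xb i) + D 0" by (simp add: M_def D_def sub0)
  have "(\<Sum>j\<le>k. integral {xs i j..xs i (Suc j)} (\<lambda>x. deriv v x * M j))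
      = (\<Sum>j\<le>k. M j * (V (Suc j) - V j))"
    by (intro sum.cong refl) (simp add: int_deriv[OF less_imp_le[OF mono] vd] V_def)
  also have "\<dots> = M k * V (Suc k) - M 0 * V 0 - (\<Sum>j\<in>{1..k}. D j * V j)"
    by (rule sbp[of M D, OF MS])
  finally have L: "(\<Sum>j\<le>k. integral {xs i j..xs i (Suc j)} (\<lambda>x. deriv v x * M j))
      = M k * V (Suc k) - M 0 * V 0 - (\<Sum>j\<in>{1..k}. D j * V j)" .
  have Mk: "M k = M 0 + (\<Sum>j\<in>{1..k}. D j)" by (rule sbp2[of M D, OF MS])
  have dp: "\<And>x. poly \<omega>' differentiable (at x)" for \<omega>' :: "real poly"
    using poly_DERIV[of \<omega>'] real_differentiable_def by blast
  have "deriv (poly (\<omega> i)) = poly (pderiv (\<omega> i))"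
    by (rule ext, rule DERIV_imp_deriv, rule poly_DERIV)
  then have E: "poly (\<omega> i) (xb (Suc i)) - poly (\<omega> i) (xb i) = (\<Sum>j\<le>Suc k. D j)"
    using ex int_deriv[OF mono2 dp, of "\<omega> i"] by (simp add: quadQ_def D_def)
  have Q: "quadQ k xs A i (\<lambda>x. v x * poly (pderiv (\<omega> i)) x) = (\<Sum>j\<le>Suc k. D j * V j)"
    unfolding quadQ_def D_def V_def by (simp add: algebra_simps)
  show ?thesis
    unfolding M_def[symmetric] L Q
    using E Mk M0 unfolding sum_split_ends
    by (simp add: V_def sub0 subend algebra_simps)
qed

lemma cyc_shift:
  fixes F :: "nat \<Rightarrow> real"
  assumes "N \<ge> 1"
  shows "(\<Sum>i<N. F (Suc i mod N)) = (\<Sum>i<N. F i)"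
proof -
  obtain M where N: "N = Suc M" using assms by (cases N) auto
  have "(\<Sum>i<Suc M. F (Suc i mod Suc M)) = (\<Sum>i<M. F (Suc i)) + F 0"
    by (simp add: sum.lessThan_Suc)
  also have "\<dots> = (\<Sum>i<Suc M. F i)" using sum.lessThan_Suc_shift[of F M] by linarith
  finally show ?thesis using N by simp
qed

lemma key:
  fixes v :: "real \<Rightarrow> real"
  assumes N_pos: "N \<ge> 1"
    and mesh0: "xb 0 = a" and meshN: "xb N = b"
    and mesh_mono: "\<And>i. i < N \<Longrightarrow> xb i < xb (Suc i)"
    and sub0: "\<And>i. i < N \<Longrightarrow> xs i 0 = xb i"
    and subend: "\<And>i. i < N \<Longrightarrow> xs i (Suc k) = xb (Suc i)"
    and sub_mono: "\<And>i j. i < N \<Longrightarrow> j \<le> k \<Longrightarrow> xs i j < xs i (Suc j)"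
    and exact: "\<And>i p. i < N \<Longrightarrow> degree p \<le> k - 1 \<Longrightarrow>
                  integral {xb i..xb (Suc i)} (poly p) = quadQ k xs A i (poly p)"
    and deg: "\<forall>i<N. degree (\<omega> i) \<le> k"
    and vd: "\<And>x. v differentiable (at x)"
    and vper: "v b = v a"
  shows "Hstar \<beta> N k xb xs A v \<omega> = - \<beta> * ipStar N k xs (deriv v) (Mstar xb xs A \<omega>)"
proof -
  define F where "F = (\<lambda>i. v (xb i) * poly (\<omega> i) (xb i))"
  define Q where "Q = (\<lambda>i. quadQ k xs A i (\<lambda>x. v x * poly (pderiv (\<omega> i)) x))"
  have ip: "ipStar N k xs (deriv v) (Mstar xb xs A \<omega>) =
      (\<Sum>i<N. poly (\<omega> i) (xb (Suc i)) * v (xb (Suc i)) - F i - Q i)"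
    unfolding ipStar_def
  proof (intro sum.cong refl)
    fix i assume "i \<in> {..<N}"
    then have i: "i < N" by simp
    have ex: "integral {xb i..xb (Suc i)} (poly (pderiv (\<omega> i))) = quadQ k xs A i (poly (pderiv (\<omega> i)))"
      using exact[OF i, of "pderiv (\<omega> i)"] deg i by (simp add: degree_pderiv diff_le_mono)
    show "(\<Sum>j\<le>k. integral {xs i j..xs i (Suc j)} (\<lambda>x. deriv v x * Mstar xb xs A \<omega> i j)) =
        poly (\<omega> i) (xb (Suc i)) * v (xb (Suc i)) - F i - Q i"
      using cell[where xs=xs and i=i and xb=xb and k=k and A=A and \<omega>=\<omega> and v=v, OF sub0[OF i] subend[OF i] sub_mono[OF i] less_imp_le[OF mesh_mono[OF i]] vd ex]
      by (simp add: F_def Q_def)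
  qed
  have vN: "v (xb N) = v (xb 0)" using vper mesh0 meshN by simp
  have T3: "(\<Sum>i<N. A i 0 * poly (pderiv (\<omega> i)) (xb i) *
            (v (xb i) - v (xb (Suc ((i + N - 1) mod N))))) = 0"
  proof (intro sum.neutral ballI)
    fix i assume "i \<in> {..<N}"
    then have i: "i < N" by simp
    have "v (xb (Suc ((i + N - 1) mod N))) = v (xb i)"
    proof (cases i)
      case 0 then show ?thesis using N_pos vN by simp
    next
      case (Suc i') then have "(i + N - 1) mod N = i'" using i
        by (metis Suc_lessD add_Suc diff_Suc_1 mod_add_self2 mod_less)
      then show ?thesis using Suc by simp
    qed
    then show "A i 0 * poly (pderiv (\<omega> i)) (xb i) * (v (xb i) - v (xb (Suc ((i + N - 1) mod N)))) = 0"
      by simp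
  qed
  have T2: "(\<Sum>i<N. v (xb (Suc i)) * poly (\<omega> (Suc i mod N)) (xb (Suc i mod N))) = (\<Sum>i<N. F i)"
  proof -
    have "(\<Sum>i<N. v (xb (Suc i)) * poly (\<omega> (Suc i mod N)) (xb (Suc i mod N))) = (\<Sum>i<N. F (Suc i mod N))"
    proof (intro sum.cong refl)
      fix i assume "i \<in> {..<N}"
      then have i: "i < N" by simp
      have "v (xb (Suc i)) = v (xb (Suc i mod N))"
      proof (cases "Suc i = N")
        case True then show ?thesis using vN by simp
      next
        case False then show ?thesis using i by simp
      qed
      then show "v (xb (Suc i)) * poly (\<omega> (Suc i mod N)) (xb (Suc i mod N)) = F (Suc i mod N)"
        by (simp add: F_def)
    qed
    also have "\<dots> = (\<Sum>i<N. F i)" by (rule cyc_shift[OF N_pos])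
    finally show ?thesis .
  qed
  have H: "Hstar \<beta> N k xb xs A v \<omega> = \<beta> * ((\<Sum>i<N. Q i) + (\<Sum>i<N. F i)
         - (\<Sum>i<N. v (xb (Suc i)) * poly (\<omega> i) (xb (Suc i))))"
    unfolding Hstar_def T3 Q_def[symmetric]
    by (simp add: algebra_simps sum_subtractf T2)
  show ?thesis unfolding H ip
    by (simp add: sum_subtractf sum.distrib algebra_simps)
qed

lemma smoothf_cont: "smoothf f \<Longrightarrow> continuous_on S f"
  by (meson continuous_at_imp_continuous_on differentiable_imp_continuous_within smoothf_diff)

lemma ipStar_add:
  assumes "continuous_on UNIV f" "continuous_on UNIV g"
  shows "ipStar N k xs (\<lambda>x. f x + g x) w = ipStar N k xs f w + ipStar N k xs g w"
proof -
  have "\<And>S. (\<lambda>x. f x * c) integrable_on {a..b}" "\<And>S. (\<lambda>x. g x * c) integrable_on {a..b}" for c a b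
    using assms by (auto intro!: integrable_continuous_interval continuous_intros
        intro: continuous_on_subset)
  then show ?thesis unfolding ipStar_def
    by (simp add: distrib_right integral_add sum.distrib)
qed

lemma ipStar_cmult: "ipStar N k xs (\<lambda>x. a * f x) w = a * ipStar N k xs f w"
  unfolding ipStar_def by (simp add: sum_distrib_left mult.assoc)

lemma ipStar_zero: "ipStar N k xs (\<lambda>x. 0) w = 0"
  unfolding ipStar_def by simp

lemma ipStar_diff:
  assumes "continuous_on UNIV f" "continuous_on UNIV g"
  shows "ipStar N k xs (\<lambda>x. f x - g x) w = ipStar N k xs f w - ipStar N k xs g w"
proof -
  have "ipStar N k xs (\<lambda>x. f x + (-1) * g x) w = ipStar N k xs f w + ipStar N k xs (\<lambda>x. (-1) * g x) w"
    using assms by (intro ipStar_add) (auto intro: continuous_intros)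
  then show ?thesis using ipStar_cmult[of N k xs "-1" g w] by simp
qed

lemma ipStar_sum:
  assumes "\<And>j. j \<le> (l::nat) \<Longrightarrow> continuous_on UNIV (f j)"
  shows "ipStar N k xs (\<lambda>x. \<Sum>j\<le>l. f j x) w = (\<Sum>j\<le>l. ipStar N k xs (f j) w)"
  using assms
proof (induction l)
  case 0 then show ?case by simp
next
  case (Suc l)
  have "ipStar N k xs (\<lambda>x. (\<Sum>j\<le>l. f j x) + f (Suc l) x) w
      = ipStar N k xs (\<lambda>x. \<Sum>j\<le>l. f j x) w + ipStar N k xs (f (Suc l)) w"
    using Suc.prems by (intro ipStar_add) (auto intro!: continuous_on_sum)
  then show ?case using Suc by simp
qed

lemma Uref_props:
  fixes U :: "real \<Rightarrow> real \<Rightarrow> real"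
  assumes U_smooth: "\<And>t m x. (deriv ^^ m) (\<lambda>y. U y t) differentiable (at x)"
    and U_periodic: "\<And>x t. U (x + p) t = U x t"
  shows "smoothf (Uref c d \<beta> \<tau> s U n q) \<and> perf p (Uref c d \<beta> \<tau> s U n q)"
proof (induction q rule: less_induct)
  case (less q)
  have base: "smoothf (\<lambda>x. U x t) \<and> perf p (\<lambda>x. U x t)" for t
    using U_smooth U_periodic unfolding smoothf_def perf_def by auto
  show ?case
  proof (cases q)
    case 0 then show ?thesis using base by simp
  next
    case (Suc l)
    show ?thesis
    proof (cases "Suc l = s")
      case True
      have "Uref c d \<beta> \<tau> s U n q = (\<lambda>x. U x (real (Suc n) * \<tau>))"
        unfolding Suc Uref.simps using True by simp
      then show ?thesis using base by simp
    next
      case False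
      have IH: "\<And>\<kappa>. \<kappa> \<le> l \<Longrightarrow> smoothf (Uref c d \<beta> \<tau> s U n \<kappa>) \<and> perf p (Uref c d \<beta> \<tau> s U n \<kappa>)"
        using less Suc by auto
      have sm: "smoothf (\<lambda>x. \<Sum>\<kappa>\<le>l. c l \<kappa> * Uref c d \<beta> \<tau> s U n \<kappa> x
                        - \<tau> * d l \<kappa> * \<beta> * deriv (Uref c d \<beta> \<tau> s U n \<kappa>) x)"
        using IH by (intro smoothf_sum smoothf_minus smoothf_cmult smoothf_deriv) auto
      have pd: "\<And>\<kappa> x. \<kappa> \<le> l \<Longrightarrow> deriv (Uref c d \<beta> \<tau> s U n \<kappa>) (x + p) = deriv (Uref c d \<beta> \<tau> s U n \<kappa>) x"
        using IH perf_deriv unfolding perf_def by blast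
      have pu: "\<And>\<kappa> x. \<kappa> \<le> l \<Longrightarrow> Uref c d \<beta> \<tau> s U n \<kappa> (x + p) = Uref c d \<beta> \<tau> s U n \<kappa> x"
        using IH unfolding perf_def by blast
      have pr: "perf p (\<lambda>x. \<Sum>\<kappa>\<le>l. c l \<kappa> * Uref c d \<beta> \<tau> s U n \<kappa> x
                        - \<tau> * d l \<kappa> * \<beta> * deriv (Uref c d \<beta> \<tau> s U n \<kappa>) x)"
        unfolding perf_def using pd pu by simp
      show ?thesis using Suc False sm pr by simp
    qed
  qed
qed

theorem proposition4p16:
  fixes a b \<beta> \<tau> :: real and N k s n :: nat
    and xb :: "nat \<Rightarrow> real" and xs A :: "nat \<Rightarrow> nat \<Rightarrow> real"
    and c d :: "nat \<Rightarrow> nat \<Rightarrow> real"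
    and U :: "real \<Rightarrow> real \<Rightarrow> real"
  assumes N_pos: "N \<ge> 1"
    and mesh0: "xb 0 = a" and meshN: "xb N = b"
    and mesh_mono: "\<And>i. i < N \<Longrightarrow> xb i < xb (Suc i)"
    and sub0: "\<And>i. i < N \<Longrightarrow> xs i 0 = xb i"
    and subend: "\<And>i. i < N \<Longrightarrow> xs i (Suc k) = xb (Suc i)"
    and sub_mono: "\<And>i j. i < N \<Longrightarrow> j \<le> k \<Longrightarrow> xs i j < xs i (Suc j)"
    and exact: "\<And>i p. i < N \<Longrightarrow> degree p \<le> k - 1 \<Longrightarrow>
                  integral {xb i..xb (Suc i)} (poly p) = quadQ k xs A i (poly p)"
    and S: "assumptionS N k xb xs A"
    and beta_pos: "\<beta> > 0" and tau_pos: "\<tau> > 0" and s_pos: "s \<ge> 1"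
    and c_sum: "\<And>l. l \<le> s - 1 \<Longrightarrow> (\<Sum>\<kappa>\<le>l. c l \<kappa>) = 1"
    and U_smooth: "\<And>t m x. (deriv ^^ m) (\<lambda>y. U y t) differentiable (at x)"
    and U_pde: "\<And>x t. ((\<lambda>t'. U x t') has_real_derivative (- \<beta> * deriv (\<lambda>y. U y t) x)) (at t)"
    and U_periodic: "\<And>x t. U (x + (b - a)) t = U x t"
  shows "\<forall>\<omega> :: nat \<Rightarrow> real poly. (\<forall>i<N. degree (\<omega> i) \<le> k) \<longrightarrow>
           (\<forall>l<s. ipStar N k xs (Uref c d \<beta> \<tau> s U n (Suc l)) (Mstar xb xs A \<omega>)
              = (\<Sum>\<kappa>\<le>l. c l \<kappa> * ipStar N k xs (Uref c d \<beta> \<tau> s U n \<kappa>) (Mstar xb xs A \<omega>)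
                        + \<tau> * d l \<kappa> * Hstar \<beta> N k xb xs A (Uref c d \<beta> \<tau> s U n \<kappa>) \<omega>)
                + \<tau> * ipStar N k xs (rho c d \<beta> \<tau> s U n (Suc l)) (Mstar xb xs A \<omega>))"
proof (intro allI impI)
  fix \<omega> :: "nat \<Rightarrow> real poly" and l
  assume deg: "\<forall>i<N. degree (\<omega> i) \<le> k" and ls: "l < s"
  define V where "V = Uref c d \<beta> \<tau> s U n"
  define W where "W = Mstar xb xs A \<omega>"
  have props: "\<And>q. smoothf (V q) \<and> perf (b - a) (V q)"
    unfolding V_def by (rule Uref_props[OF U_smooth U_periodic])
  have cV: "\<And>q. continuous_on UNIV (V q)" using props smoothf_cont by blast
  have cdV: "\<And>q. continuous_on UNIV (deriv (V q))" using props smoothf_cont smoothf_deriv by blast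
  have Hk: "\<And>q. Hstar \<beta> N k xb xs A (V q) \<omega> = - \<beta> * ipStar N k xs (deriv (V q)) W"
  proof -
    fix q
    have vper: "V q b = V q a" using props[of q] unfolding perf_def
      by (metis add.commute diff_add_cancel)
    show "Hstar \<beta> N k xb xs A (V q) \<omega> = - \<beta> * ipStar N k xs (deriv (V q)) W"
      unfolding W_def
      by (rule key[OF N_pos mesh0 meshN mesh_mono sub0 subend sub_mono exact deg
            smoothf_diff[OF conjunct1[OF props]] vper])
  qed
  define G where "G = (\<lambda>\<kappa> x. c l \<kappa> * V \<kappa> x - \<tau> * d l \<kappa> * \<beta> * deriv (V \<kappa>) x)"
  have cG: "\<And>\<kappa>. continuous_on UNIV (G \<kappa>)"
    unfolding G_def using cV cdV by (auto intro!: continuous_intros)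
  have ipG: "\<And>\<kappa>. ipStar N k xs (G \<kappa>) W = c l \<kappa> * ipStar N k xs (V \<kappa>) W
        + \<tau> * d l \<kappa> * Hstar \<beta> N k xb xs A (V \<kappa>) \<omega>"
  proof -
    fix \<kappa>
    have "ipStar N k xs (G \<kappa>) W = ipStar N k xs (\<lambda>x. c l \<kappa> * V \<kappa> x) W
        - ipStar N k xs (\<lambda>x. (\<tau> * d l \<kappa> * \<beta>) * deriv (V \<kappa>) x) W"
      unfolding G_def using cV cdV by (intro ipStar_diff) (auto intro!: continuous_intros)
    then show "ipStar N k xs (G \<kappa>) W = c l \<kappa> * ipStar N k xs (V \<kappa>) W
        + \<tau> * d l \<kappa> * Hstar \<beta> N k xb xs A (V \<kappa>) \<omega>"
      by (simp add: ipStar_cmult Hk)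
  qed
  have sumG: "ipStar N k xs (\<lambda>x. \<Sum>\<kappa>\<le>l. G \<kappa> x) W = (\<Sum>\<kappa>\<le>l. ipStar N k xs (G \<kappa>) W)"
    using cG by (intro ipStar_sum) auto
  show "ipStar N k xs (V (Suc l)) W
      = (\<Sum>\<kappa>\<le>l. c l \<kappa> * ipStar N k xs (V \<kappa>) W + \<tau> * d l \<kappa> * Hstar \<beta> N k xb xs A (V \<kappa>) \<omega>)
        + \<tau> * ipStar N k xs (rho c d \<beta> \<tau> s U n (Suc l)) W"
  proof (cases "Suc l = s")
    case True
    have VS: "V (Suc l) = (\<lambda>x. U x (real (Suc n) * \<tau>))"
      unfolding V_def Uref.simps using True by simp
    have R: "rho c d \<beta> \<tau> s U n (Suc l) = (\<lambda>x. (1 / \<tau>) * (U x (real (Suc n) * \<tau>) - (\<Sum>\<kappa>\<le>l. G \<kappa> x)))"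
      unfolding rho.simps G_def V_def using True by simp
    have "ipStar N k xs (rho c d \<beta> \<tau> s U n (Suc l)) W
        = (1 / \<tau>) * (ipStar N k xs (V (Suc l)) W - ipStar N k xs (\<lambda>x. \<Sum>\<kappa>\<le>l. G \<kappa> x) W)"
      unfolding R ipStar_cmult using cV[of "Suc l", unfolded VS] cG VS
      by (subst ipStar_diff) (auto intro!: continuous_on_sum)
    then show ?thesis using tau_pos unfolding sumG ipG by simp
  next
    case False
    have VS: "V (Suc l) = (\<lambda>x. \<Sum>\<kappa>\<le>l. G \<kappa> x)"
      unfolding V_def G_def using False by simp
    have R: "rho c d \<beta> \<tau> s U n (Suc l) = (\<lambda>x. 0)" using False by simp
    show ?thesis unfolding VS R ipStar_zero sumG ipG by simp
  qed
qed

end
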